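(* Let $\mathcal{E}=(\mathbf{R},\mathbf{S},\Sigma_{st},\mathbf{F})$ be a constructive relational to RDF data exchange setting in which every st-tgd head is a single atom, let $(T,f,p)$ be a violation sort, and let $I$ be an instance of $\mathcal{R}$ (not necessarily satisfying $\Sigma_{fd}$). (1) The following are equivalent: (a) there exist a sequence $\pi$ such that $(T,f)$ is accessible in $\mathcal{E}$ with $\pi$, two st-tgds $\sigma,\sigma'$ contentious with sort $(T,f,p)$, and a homomorphism $h:I_{\pi,\sigma,\sigma'}\to I$; (b) there exist a tuple $\bar a$ of constants from the active domain of $I$ and constants $b,b'$ such that the core pre-solution for $I$ to $\mathcal{E}$ includes $\{T(f^F(\bar a)),\mathit{Triple}(f^F(\bar a),p,b),\mathit{Triple}(f^F(\bar a),p,b')\}$. (2) Moreover, writing the heads of $\sigma,\sigma'$ as $\mathit{Triple}(f(\bar z),p,t)$ and $\mathit{Triple}(f(\bar z'),p,t')$, the witnesses correspond via $\bar a=(h\circ h_{\pi,\sigma,\sigma'})(\bar z)=(h\circ h_{\pi,\sigma,\sigma'})(\bar z')$, $b=(h\circ h_{\pi,\sigma,\sigma'})(t)$ and $b'=(h\circ h_{\pi,\sigma,\sigma'})(t')$ (terms $g(\bar u)$ being evaluated as $g^F$ applied to the image of $\bar u$).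
   Context: Values: $\mathsf{Iri}$ (IRIs, containing predicates $\mathsf{Pred}$), $\mathsf{NullIri}$, $\mathsf{Lit}$ with null literals $\mathsf{NullLit}\subseteq\mathsf{Lit}$; non-null values are constants. $\mathbf{R}=(\mathcal{R},\Sigma_{fd})$: relation names with arities and functional dependencies; an instance of $\mathcal{R}$ assigns finite sets of tuples of literal values to relation names. Deterministic shape schema $\mathbf{S}=(\mathcal{T},\delta)$, $\delta:\mathcal{T}\times\mathsf{Pred}\rightharpoonup(\mathcal{T}\cup\{\mathit{Literal}\})\times\{1,?,*,+\}$, written $\delta(T,p)=S^\mu$. IRI constructor library $\mathbf{F}=(\mathcal{F},F)$, each $n$-ary $f$ interpreted as $f^F:\mathsf{Lit}^n\to\mathsf{Iri}$ (constants), with pairwise disjoint ranges; st-tgds are full, $\forall\bar x.\,\varphi\Rightarrow\psi$ with $\varphi$ a conjunction of atoms over $\mathcal{R}$ and $\psi$ one atom $\mathit{Triple}(t_1,p,t_2)$, $T(t)$ or $\mathit{Literal}(t)$, terms being variables or $f(\bar u)$ with $\bar u$ variables. Core pre-solution of $I$: least set $J_0$ of facts containing, for every st-tgd and assignment $g$ of its variables making its body true in $I$, its head atom with terms evaluated ($f(\bar u)\mapsto f^F(g(\bar u))$), closed under: $T(a),\mathit{Triple}(a,p,b)\in J_0$, $\delta(T,p)=S^\mu$ imply $S(b)\in J_0$. Accessibility: $(T,f)$ is accessible with $\pi=\sigma_0,\dots,\sigma_n$ if for some types $T_i$, constructors $f_i$, predicates $p_i$, variable tuples $\bar x_i,\bar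 y_i$: head of $\sigma_0$ is $T_0(f_0(\bar y_0))$, head of $\sigma_i$ is $\mathit{Triple}(f_{i-1}(\bar x_i),p_i,f_i(\bar y_i))$ ($1\le i\le n$), $\delta(T_{i-1},p_i)=T_i^{\mu_i}$ ($1\le i\le n$), $T_n=T$, $f_n=f$. A violation sort is $(T,f,p)$ with $T\in\mathcal{T}$, $f\in\mathcal{F}$, $\delta(T,p)=S^\mu$ for some $S$ and $\mu\in\{1,?\}$. Two st-tgds $\sigma,\sigma'$ (possibly two variable-renamed copies of the same st-tgd) are contentious with sort $(T,f,p)$ if the head of $\sigma$ is $\mathit{Triple}(f(\bar z),p,t)$, the head of $\sigma'$ is $\mathit{Triple}(f(\bar z'),p,t')$, $(T,f)$ is accessible in $\mathcal{E}$ and $\delta(T,p)=S^\mu$ with $\mu\in\{1,?\}$. Construction of $I_{\pi,\sigma,\sigma'}$: rename variables so that $\sigma_0,\dots,\sigma_n,\sigma_{n+1}=\sigma,\sigma_{n+2}=\sigma'$ use pairwise disjoint variables; let $B_{\pi,\sigma,\sigma'}$ be the union of their bodies (variables as domain elements); let $h_{\pi,\sigma,\sigma'}$ map the variables of these st-tgds to null literals, identifying (componentwise) $\bar x_i$ with $\bar y_{i-1}$ for $1\le i\le n$, $\bar z$ with $\bar y_n$, and $\bar z'$ with $\bar y_n$, and assigning fresh distinct nulls otherwise; $I_{\pi,\sigma,\sigma'}=h_{\pi,\sigma,\sigma'}(B_{\pi,\sigma,\sigma'})$ (unique up to isomorphism). A homomorphism $h:I_{\pi,\sigma,\sigma'}\to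 I$ maps nulls to values so that every fact of $I_{\pi,\sigma,\sigma'}$ is mapped to a fact of $I$. *)

theory Defs
  imports Main
begin

datatype ('f,'v) iterm = Var 'v | Fn 'f "'v list"

datatype ('t,'p,'f,'v) head =
    HTriple "('f,'v) iterm" 'p "('f,'v) iterm"
  | HType 't "('f,'v) iterm"
  | HLiteral "('f,'v) iterm"

type_synonym ('r,'t,'p,'f,'v) tgd = "('r \<times> 'v list) list \<times> ('t,'p,'f,'v) head"

datatype 't shape = ShType 't | ShLiteral
datatype mult = MOne | MOpt | MStar | MPlus

datatype ('i,'l) val = Iri 'i | Lit 'l

datatype ('t,'p,'i,'l) tfact =
    Triple "('i,'l) val" 'p "('i,'l) val"
  | TypeF 't "('i,'l) val"
  | LiteralF "('i,'l) val"

text \<open>A data exchange setting: relational arities (FDs play no role here since I need not satisfy them),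
 the deterministic shape schema delta (types = all elements of 't, predicates = all elements of 'p),
 the IRI constructor library (arities and interpretation), and the st-tgds.\<close>
record ('r,'t,'p,'f,'i,'l,'v) setting =
  rel_arity :: "'r \<Rightarrow> nat"
  delta :: "'t \<Rightarrow> 'p \<Rightarrow> ('t shape \<times> mult) option"
  cons_arity :: "'f \<Rightarrow> nat"
  cons_int :: "'f \<Rightarrow> 'l list \<Rightarrow> 'i"
  stgds :: "('r,'t,'p,'f,'v) tgd set"

fun is_const :: "'i set \<Rightarrow> 'l set \<Rightarrow> ('i,'l) val \<Rightarrow> bool" where
  "is_const nullI nullL (Iri i) = (i \<notin> nullI)"
| "is_const nullI nullL (Lit l) = (l \<notin> nullL)"

definition adom :: "('r \<times> 'l list) set \<Rightarrow> 'l set" where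
  "adom I = (\<Union>(R,us)\<in>I. set us)"

fun term_vars :: "('f,'v) iterm \<Rightarrow> 'v set" where
  "term_vars (Var x) = {x}"
| "term_vars (Fn f us) = set us"

fun head_vars :: "('t,'p,'f,'v) head \<Rightarrow> 'v set" where
  "head_vars (HTriple s p ob) = term_vars s \<union> term_vars ob"
| "head_vars (HType T t) = term_vars t"
| "head_vars (HLiteral t) = term_vars t"

definition body_vars :: "('r \<times> 'v list) list \<Rightarrow> 'v set" where
  "body_vars B = (\<Union>(R,xs)\<in>set B. set xs)"

definition tgd_vars :: "('r,'t,'p,'f,'v) tgd \<Rightarrow> 'v set" where
  "tgd_vars \<sigma> = body_vars (fst \<sigma>) \<union> head_vars (snd \<sigma>)"

fun wf_term :: "('r,'t,'p,'f,'i,'l,'v) setting \<Rightarrow> ('f,'v) iterm \<Rightarrow> bool" where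
  "wf_term E (Var x) = True"
| "wf_term E (Fn f us) = (length us = cons_arity E f)"

fun wf_head :: "('r,'t,'p,'f,'i,'l,'v) setting \<Rightarrow> ('t,'p,'f,'v) head \<Rightarrow> bool" where
  "wf_head E (HTriple s p ob) = (wf_term E s \<and> wf_term E ob)"
| "wf_head E (HType T t) = wf_term E t"
| "wf_head E (HLiteral t) = wf_term E t"

fun is_fn :: "('f,'v) iterm \<Rightarrow> bool" where
  "is_fn (Fn f us) = True"
| "is_fn (Var x) = False"

definition wf_setting :: "('r,'t,'p,'f,'i,'l,'v) setting \<Rightarrow> 'i set \<Rightarrow> bool" where
  "wf_setting E nullI \<longleftrightarrow>
     (\<forall>\<sigma>\<in>stgds E. (\<forall>(R,xs)\<in>set (fst \<sigma>). length xs = rel_arity E R)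
                 \<and> wf_head E (snd \<sigma>) \<and> head_vars (snd \<sigma>) \<subseteq> body_vars (fst \<sigma>))
   \<and> (\<forall>f xs. length xs = cons_arity E f \<longrightarrow> cons_int E f xs \<notin> nullI)
   \<and> (\<forall>f g xs ys. f \<noteq> g \<longrightarrow> length xs = cons_arity E f \<longrightarrow> length ys = cons_arity E g
          \<longrightarrow> cons_int E f xs \<noteq> cons_int E g ys)"

definition constructive :: "('r,'t,'p,'f,'i,'l,'v) setting \<Rightarrow> bool" where
  "constructive E \<longleftrightarrow>
     (\<forall>f. inj_on (cons_int E f) {xs. length xs = cons_arity E f})
   \<and> (\<forall>\<sigma>\<in>stgds E. case snd \<sigma> of
          HType T t \<Rightarrow> is_fn t
        | HTriple s p ob \<Rightarrow> is_fn s
        | HLiteral t \<Rightarrow> True)"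

definition rel_instance :: "('r,'t,'p,'f,'i,'l,'v) setting \<Rightarrow> ('r \<times> 'l list) set \<Rightarrow> bool" where
  "rel_instance E I \<longleftrightarrow> finite I \<and> (\<forall>(R,us)\<in>I. length us = rel_arity E R)"

fun eval_term :: "('f \<Rightarrow> 'l list \<Rightarrow> 'i) \<Rightarrow> ('v \<Rightarrow> 'l) \<Rightarrow> ('f,'v) iterm \<Rightarrow> ('i,'l) val" where
  "eval_term F g (Var x) = Lit (g x)"
| "eval_term F g (Fn f us) = Iri (F f (map g us))"

fun eval_head :: "('f \<Rightarrow> 'l list \<Rightarrow> 'i) \<Rightarrow> ('v \<Rightarrow> 'l) \<Rightarrow> ('t,'p,'f,'v) head \<Rightarrow> ('t,'p,'i,'l) tfact" where
  "eval_head F g (HTriple s p ob) = Triple (eval_term F g s) p (eval_term F g ob)"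
| "eval_head F g (HType T t) = TypeF T (eval_term F g t)"
| "eval_head F g (HLiteral t) = LiteralF (eval_term F g t)"

fun shape_fact :: "'t shape \<Rightarrow> ('i,'l) val \<Rightarrow> ('t,'p,'i,'l) tfact" where
  "shape_fact (ShType S) b = TypeF S b"
| "shape_fact ShLiteral b = LiteralF b"

definition body_sat :: "('r \<times> 'l list) set \<Rightarrow> ('v \<Rightarrow> 'l) \<Rightarrow> ('r \<times> 'v list) list \<Rightarrow> bool" where
  "body_sat I g B \<longleftrightarrow> (\<forall>(R,xs)\<in>set B. (R, map g xs) \<in> I)"

inductive_set core_pre :: "('r,'t,'p,'f,'i,'l,'v) setting \<Rightarrow> ('r \<times> 'l list) set \<Rightarrow> ('t,'p,'i,'l) tfact set"
  for E :: "('r,'t,'p,'f,'i,'l,'v) setting" and I :: "('r \<times> 'l list) set" where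
  base: "\<sigma> \<in> stgds E \<Longrightarrow> body_sat I g (fst \<sigma>) \<Longrightarrow> eval_head (cons_int E) g (snd \<sigma>) \<in> core_pre E I"
| close: "TypeF T a \<in> core_pre E I \<Longrightarrow> Triple a p b \<in> core_pre E I \<Longrightarrow> delta E T p = Some (S, \<mu>)
          \<Longrightarrow> shape_fact S b \<in> core_pre E I"

definition accessible_with :: "('r,'t,'p,'f,'i,'l,'v) setting \<Rightarrow> ('r,'t,'p,'f,'v) tgd list \<Rightarrow> 't \<Rightarrow> 'f \<Rightarrow> bool" where
  "accessible_with E \<pi> T f \<longleftrightarrow> \<pi> \<noteq> [] \<and> set \<pi> \<subseteq> stgds E \<and>
     (\<exists>Ts fs ps. length Ts = length \<pi> \<and> length fs = length \<pi> \<and> length ps = length \<pi>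
        \<and> (\<exists>ys. snd (\<pi>!0) = HType (Ts!0) (Fn (fs!0) ys))
        \<and> (\<forall>i. 1 \<le> i \<and> i < length \<pi> \<longrightarrow>
              (\<exists>xs ys. snd (\<pi>!i) = HTriple (Fn (fs!(i-1)) xs) (ps!i) (Fn (fs!i) ys))
            \<and> (\<exists>\<mu>. delta E (Ts!(i-1)) (ps!i) = Some (ShType (Ts!i), \<mu>)))
        \<and> last Ts = T \<and> last fs = f)"

definition accessible :: "('r,'t,'p,'f,'i,'l,'v) setting \<Rightarrow> 't \<Rightarrow> 'f \<Rightarrow> bool" where
  "accessible E T f \<longleftrightarrow> (\<exists>\<pi>. accessible_with E \<pi> T f)"

text \<open>(T,f,p) is a violation sort (T and f range over all types/constructors).\<close>
definition violation_sort :: "('r,'t,'p,'f,'i,'l,'v) setting \<Rightarrow> 't \<Rightarrow> 'p \<Rightarrow> bool" where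
  "violation_sort E T p \<longleftrightarrow> (\<exists>S \<mu>. delta E T p = Some (S, \<mu>) \<and> \<mu> \<in> {MOne, MOpt})"

definition contentious :: "('r,'t,'p,'f,'i,'l,'v) setting \<Rightarrow> ('r,'t,'p,'f,'v) tgd \<Rightarrow> ('r,'t,'p,'f,'v) tgd
     \<Rightarrow> 't \<Rightarrow> 'f \<Rightarrow> 'p \<Rightarrow> bool" where
  "contentious E \<sigma> \<sigma>' T f p \<longleftrightarrow> \<sigma> \<in> stgds E \<and> \<sigma>' \<in> stgds E
     \<and> (\<exists>z t z' t'. snd \<sigma> = HTriple (Fn f z) p t \<and> snd \<sigma>' = HTriple (Fn f z') p t')
     \<and> accessible E T f \<and> violation_sort E T p"

fun subj_args :: "('t,'p,'f,'v) head \<Rightarrow> 'v list" where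
  "subj_args (HTriple (Fn f xs) p ob) = xs"
| "subj_args _ = []"

fun obj_args :: "('t,'p,'f,'v) head \<Rightarrow> 'v list" where
  "obj_args (HTriple s p (Fn f ys)) = ys"
| "obj_args (HType T (Fn f ys)) = ys"
| "obj_args _ = []"

fun obj_term :: "('t,'p,'f,'v) head \<Rightarrow> ('f,'v) iterm" where
  "obj_term (HTriple s p ob) = ob"
| "obj_term (HType T t) = t"
| "obj_term (HLiteral t) = t"

text \<open>The sequence sigma_0..sigma_n, sigma_{n+1} = sigma, sigma_{n+2} = sigma'. Renaming apart is
 realized by tagging each variable with the position k of its st-tgd: (k, x).\<close>
definition tgd_seq :: "('r,'t,'p,'f,'v) tgd list \<Rightarrow> ('r,'t,'p,'f,'v) tgd \<Rightarrow> ('r,'t,'p,'f,'v) tgd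
     \<Rightarrow> ('r,'t,'p,'f,'v) tgd list" where
  "tgd_seq \<pi> \<sigma> \<sigma>' = \<pi> @ [\<sigma>, \<sigma>']"

text \<open>Index of the st-tgd whose object tuple is identified with the subject tuple at position i:
 i-1 for 1 <= i <= n, and n for i = n+1, n+2.\<close>
definition prev_idx :: "('r,'t,'p,'f,'v) tgd list \<Rightarrow> nat \<Rightarrow> nat" where
  "prev_idx \<pi> i = (if i < length \<pi> then i - 1 else length \<pi> - 1)"

definition ident :: "('r,'t,'p,'f,'v) tgd list \<Rightarrow> ('r,'t,'p,'f,'v) tgd \<Rightarrow> ('r,'t,'p,'f,'v) tgd
     \<Rightarrow> ((nat \<times> 'v) \<times> (nat \<times> 'v)) set" where
  "ident \<pi> \<sigma> \<sigma>' = {((i, x), (prev_idx \<pi> i, y)) | i x y.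
      1 \<le> i \<and> i < length (tgd_seq \<pi> \<sigma> \<sigma>') \<and>
      (x, y) \<in> set (zip (subj_args (snd (tgd_seq \<pi> \<sigma> \<sigma>' ! i)))
                         (obj_args (snd (tgd_seq \<pi> \<sigma> \<sigma>' ! prev_idx \<pi> i))))}"

definition tagged_vars :: "('r,'t,'p,'f,'v) tgd list \<Rightarrow> ('r,'t,'p,'f,'v) tgd \<Rightarrow> ('r,'t,'p,'f,'v) tgd
     \<Rightarrow> (nat \<times> 'v) set" where
  "tagged_vars \<pi> \<sigma> \<sigma>' = {(k, v) | k v. k < length (tgd_seq \<pi> \<sigma> \<sigma>') \<and> v \<in> tgd_vars (tgd_seq \<pi> \<sigma> \<sigma>' ! k)}"

definition tagged_body :: "('r,'t,'p,'f,'v) tgd list \<Rightarrow> ('r,'t,'p,'f,'v) tgd \<Rightarrow> ('r,'t,'p,'f,'v) tgd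
     \<Rightarrow> ('r \<times> (nat \<times> 'v) list) set" where
  "tagged_body \<pi> \<sigma> \<sigma>' = {(R, map (Pair k) xs) | k R xs.
      k < length (tgd_seq \<pi> \<sigma> \<sigma>') \<and> (R, xs) \<in> set (fst (tgd_seq \<pi> \<sigma> \<sigma>' ! k))}"

text \<open>hp is a valid choice of h_{pi,sigma,sigma'}: it maps the variables to null literals,
 identifying exactly the variables related by the (equivalence closure of the) required
 identifications, and assigning distinct nulls otherwise.\<close>
definition is_h_pi :: "'l set \<Rightarrow> ('r,'t,'p,'f,'v) tgd list \<Rightarrow> ('r,'t,'p,'f,'v) tgd \<Rightarrow> ('r,'t,'p,'f,'v) tgd
     \<Rightarrow> (nat \<times> 'v \<Rightarrow> 'l) \<Rightarrow> bool" where
  "is_h_pi nullL \<pi> \<sigma> \<sigma>' hp \<longleftrightarrow>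
     (\<forall>u\<in>tagged_vars \<pi> \<sigma> \<sigma>'. hp u \<in> nullL) \<and>
     (\<forall>u\<in>tagged_vars \<pi> \<sigma> \<sigma>'. \<forall>w\<in>tagged_vars \<pi> \<sigma> \<sigma>'.
         hp u = hp w \<longleftrightarrow> (u, w) \<in> (ident \<pi> \<sigma> \<sigma>' \<union> (ident \<pi> \<sigma> \<sigma>')\<inverse>)\<^sup>*)"

definition I_pi :: "('r,'t,'p,'f,'v) tgd list \<Rightarrow> ('r,'t,'p,'f,'v) tgd \<Rightarrow> ('r,'t,'p,'f,'v) tgd
     \<Rightarrow> (nat \<times> 'v \<Rightarrow> 'l) \<Rightarrow> ('r \<times> 'l list) set" where
  "I_pi \<pi> \<sigma> \<sigma>' hp = (\<lambda>(R, us). (R, map hp us)) ` tagged_body \<pi> \<sigma> \<sigma>'"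

definition is_hom :: "'l set \<Rightarrow> ('l \<Rightarrow> 'l) \<Rightarrow> ('r \<times> 'l list) set \<Rightarrow> ('r \<times> 'l list) set \<Rightarrow> bool" where
  "is_hom nullL h J I \<longleftrightarrow> (\<forall>a. a \<notin> nullL \<longrightarrow> h a = a) \<and> (\<forall>(R, us)\<in>J. (R, map h us) \<in> I)"

definition cond_a :: "('r,'t,'p,'f,'i,'l,'v) setting \<Rightarrow> 'l set \<Rightarrow> ('r \<times> 'l list) set \<Rightarrow> 't \<Rightarrow> 'f \<Rightarrow> 'p
     \<Rightarrow> ('r,'t,'p,'f,'v) tgd list \<Rightarrow> ('r,'t,'p,'f,'v) tgd \<Rightarrow> ('r,'t,'p,'f,'v) tgd
     \<Rightarrow> (nat \<times> 'v \<Rightarrow> 'l) \<Rightarrow> ('l \<Rightarrow> 'l) \<Rightarrow> bool" where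
  "cond_a E nullL I T f p \<pi> \<sigma> \<sigma>' hp h \<longleftrightarrow>
     accessible_with E \<pi> T f \<and> contentious E \<sigma> \<sigma>' T f p \<and>
     is_h_pi nullL \<pi> \<sigma> \<sigma>' hp \<and> is_hom nullL h (I_pi \<pi> \<sigma> \<sigma>' hp) I"

definition cond_b :: "('r,'t,'p,'f,'i,'l,'v) setting \<Rightarrow> 'i set \<Rightarrow> 'l set \<Rightarrow> ('r \<times> 'l list) set
     \<Rightarrow> 't \<Rightarrow> 'f \<Rightarrow> 'p \<Rightarrow> 'l list \<Rightarrow> ('i,'l) val \<Rightarrow> ('i,'l) val \<Rightarrow> bool" where
  "cond_b E nullI nullL I T f p a b b' \<longleftrightarrow>
     length a = cons_arity E f \<and> set a \<subseteq> adom I \<and> (\<forall>x\<in>set a. x \<notin> nullL) \<and>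
     is_const nullI nullL b \<and> is_const nullI nullL b' \<and>
     {TypeF T (Iri (cons_int E f a)), Triple (Iri (cons_int E f a)) p b,
      Triple (Iri (cons_int E f a)) p b'} \<subseteq> core_pre E I"

definition copy_assign :: "('l \<Rightarrow> 'l) \<Rightarrow> (nat \<times> 'v \<Rightarrow> 'l) \<Rightarrow> nat \<Rightarrow> 'v \<Rightarrow> 'l" where
  "copy_assign h hp k = (\<lambda>v. h (hp (k, v)))"

end

theory Submission
  imports Defs
begin

lemma subj_args_vars: "set (subj_args h) \<subseteq> head_vars h"
  by (induction h rule: subj_args.induct) auto

lemma obj_args_vars: "set (obj_args h) \<subseteq> head_vars h"
  by (induction h rule: obj_args.induct) auto

lemma obj_term_vars: "term_vars (obj_term h) \<subseteq> head_vars h"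
  by (cases h) auto

lemma wf_obj_term: "wf_head E h \<Longrightarrow> wf_term E (obj_term h)"
  by (cases h) auto

lemma eval_term_cong: assumes A: "\<And>x. x \<in> term_vars t \<Longrightarrow> g x = g' x" shows "eval_term F g t = eval_term F g' t"
proof (cases t)
  case (Fn f us)
  from A have "map g us = map g' us" using Fn by (intro map_cong) auto
  then show ?thesis using Fn by (metis eval_term.simps(2))
qed (use A in simp)

lemma body_sat_adom: "body_sat I g B \<Longrightarrow> x \<in> body_vars B \<Longrightarrow> g x \<in> adom I"
  unfolding body_sat_def body_vars_def adom_def by fastforce

lemma map_eq_zip: "map g xs = map g' ys \<Longrightarrow> (x, y) \<in> set (zip xs ys) \<Longrightarrow> g x = g' y"
proof (induction xs arbitrary: ys)
  case Nil then show ?case by simp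
next
  case (Cons a xs) then show ?case by (cases ys) auto
qed

lemma triple_inv:
  assumes "Triple x q y \<in> core_pre E I"
  shows "\<exists>\<sigma> g. \<sigma> \<in> stgds E \<and> body_sat I g (fst \<sigma>) \<and> eval_head (cons_int E) g (snd \<sigma>) = Triple x q y"
  using assms
proof (cases rule: core_pre.cases)
  case (close T a p b S \<mu>)
  then show ?thesis by (cases S) auto
next
  case (base \<sigma> g)
  then show ?thesis by (intro exI[of _ \<sigma>] exI[of _ g]) auto
qed

lemma triple_analysis:
  assumes wf: "wf_setting E nullI" and con: "constructive E"
    and "Triple (Iri (cons_int E f a)) q y \<in> core_pre E I" and la: "length a = cons_arity E f"
  shows "\<exists>\<sigma> g z t. \<sigma> \<in> stgds E \<and> body_sat I g (fst \<sigma>) \<and> snd \<sigma> = HTriple (Fn f z) q t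
     \<and> map g z = a \<and> eval_term (cons_int E) g t = y"
proof -
  obtain \<sigma> g where s: "\<sigma> \<in> stgds E" "body_sat I g (fst \<sigma>)"
    "eval_head (cons_int E) g (snd \<sigma>) = Triple (Iri (cons_int E f a)) q y"
    using triple_inv[OF assms(3)] by blast
  then obtain s0 t where h: "snd \<sigma> = HTriple s0 q t" "eval_term (cons_int E) g s0 = Iri (cons_int E f a)"
    "eval_term (cons_int E) g t = y"
    by (cases "snd \<sigma>") auto
  have "is_fn s0" using con s(1) h(1) unfolding constructive_def by fastforce
  then obtain f' z where z: "s0 = Fn f' z" by (cases s0) auto
  have lz: "length z = cons_arity E f'" using wf s(1) h(1) z unfolding wf_setting_def by fastforce
  have eq: "cons_int E f' (map g z) = cons_int E f a" using h(2) z by simp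
  have ff: "f' = f" using wf eq lz la unfolding wf_setting_def by (metis length_map)
  have "map g z = a" using con eq lz la ff unfolding constructive_def inj_on_def by auto
  then show ?thesis using s h z ff by blast
qed

definition chain :: "('r,'t,'p,'f,'i,'l,'v) setting \<Rightarrow> ('r \<times> 'l list) set \<Rightarrow> ('r,'t,'p,'f,'v) tgd list
   \<Rightarrow> (nat \<Rightarrow> 'v \<Rightarrow> 'l) \<Rightarrow> 't \<Rightarrow> 'f \<Rightarrow> 'l list \<Rightarrow> bool" where
  "chain E I \<pi> G T f a \<longleftrightarrow> accessible_with E \<pi> T f
     \<and> (\<forall>k<length \<pi>. body_sat I (G k) (fst (\<pi>!k)))
     \<and> (\<forall>i. 1 \<le> i \<and> i < length \<pi> \<longrightarrow>
          map (G i) (subj_args (snd (\<pi>!i))) = map (G (i-1)) (obj_args (snd (\<pi>!(i-1)))))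
     \<and> map (G (length \<pi> - 1)) (obj_args (snd (last \<pi>))) = a"

lemma chain_lemma:
  assumes wf: "wf_setting E nullI" and con: "constructive E"
  shows "F \<in> core_pre E I \<Longrightarrow> F = TypeF T (Iri (cons_int E f a)) \<Longrightarrow> length a = cons_arity E f
     \<Longrightarrow> \<exists>\<pi> G. chain E I \<pi> G T f a"
proof (induction F arbitrary: T f a rule: core_pre.induct)
  case (base \<sigma> g)
  obtain t where h: "snd \<sigma> = HType T t" "eval_term (cons_int E) g t = Iri (cons_int E f a)"
    using base.prems(1) by (cases "snd \<sigma>") auto
  have "is_fn t" using con base.hyps(1) h(1) unfolding constructive_def by fastforce
  then obtain f' ys where z: "t = Fn f' ys" by (cases t) auto
  have lz: "length ys = cons_arity E f'" using wf base.hyps(1) h(1) z unfolding wf_setting_def by fastforce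
  have eq: "cons_int E f' (map g ys) = cons_int E f a" using h(2) z by simp
  have ff: "f' = f" using wf eq lz base.prems(2) unfolding wf_setting_def by (metis length_map)
  have ya: "map g ys = a" using con eq lz base.prems(2) ff unfolding constructive_def inj_on_def by auto
  have "accessible_with E [\<sigma>] T f"
    unfolding accessible_with_def
    apply (intro conjI)
      apply simp
     apply (simp add: base.hyps(1))
    apply (rule exI[of _ "[T]"], rule exI[of _ "[f]"], rule exI[of _ "[undefined]"])
    using h(1) z ff by simp
  then have "chain E I [\<sigma>] (\<lambda>_. g) T f a"
    unfolding chain_def using base.hyps(2) h(1) z ya by simp
  then show ?case by blast
next
  case (close T0 c q b S \<mu>)
  have S: "S = ShType T" and b: "b = Iri (cons_int E f a)" using close.prems(1) by (cases S; simp)+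
  obtain \<tau> g where \<tau>0: "\<tau> \<in> stgds E" "body_sat I g (fst \<tau>)"
    "eval_head (cons_int E) g (snd \<tau>) = Triple c q b"
    using triple_inv[OF close.hyps(2)] by blast
  then obtain s0 t where \<tau>: "snd \<tau> = HTriple s0 q t"
    "eval_term (cons_int E) g s0 = c" "eval_term (cons_int E) g t = b"
    by (cases "snd \<tau>") auto
  have "is_fn s0" using con \<tau>0(1) \<tau>(1) unfolding constructive_def by fastforce
  then obtain f0 xs where s0: "s0 = Fn f0 xs" by (cases s0) auto
  obtain f' ys where t: "t = Fn f' ys" using \<tau>(3) b by (cases t) auto
  have lxs: "length xs = cons_arity E f0" and lys: "length ys = cons_arity E f'"
    using wf \<tau>0(1) \<tau>(1) s0 t unfolding wf_setting_def by fastforce+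
  have eq: "cons_int E f' (map g ys) = cons_int E f a" using \<tau>(3) t b by simp
  have ff: "f' = f" using wf eq lys close.prems(2) unfolding wf_setting_def by (metis length_map)
  have ya: "map g ys = a" using con eq lys close.prems(2) ff unfolding constructive_def inj_on_def by auto
  have c: "c = Iri (cons_int E f0 (map g xs))" using \<tau>(2) s0 by simp
  obtain \<pi> G where ch: "chain E I \<pi> G T0 f0 (map g xs)"
    using close.IH(1)[of T0 f0 "map g xs"] c lxs by auto
  define n where "n = length \<pi>"
  have A: "accessible_with E \<pi> T0 f0" and
    bs: "\<forall>k<n. body_sat I (G k) (fst (\<pi>!k))" and
    lk: "\<forall>i. 1 \<le> i \<and> i < n \<longrightarrow>
          map (G i) (subj_args (snd (\<pi>!i))) = map (G (i-1)) (obj_args (snd (\<pi>!(i-1))))" and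
    la: "map (G (n - 1)) (obj_args (snd (last \<pi>))) = map g xs"
    using ch unfolding chain_def n_def by auto
  have ne: "\<pi> \<noteq> []" and st: "set \<pi> \<subseteq> stgds E" using A unfolding accessible_with_def by auto
  obtain Ts fs ps where P:
    "length Ts = n \<and> length fs = n \<and> length ps = n \<and>
    (\<exists>ys. snd (\<pi>!0) = HType (Ts!0) (Fn (fs!0) ys)) \<and>
    (\<forall>i. 1 \<le> i \<and> i < n \<longrightarrow>
              (\<exists>xs ys. snd (\<pi>!i) = HTriple (Fn (fs!(i-1)) xs) (ps!i) (Fn (fs!i) ys))
            \<and> (\<exists>\<mu>. delta E (Ts!(i-1)) (ps!i) = Some (ShType (Ts!i), \<mu>))) \<and>
    last Ts = T0 \<and> last fs = f0"
    using A unfolding accessible_with_def n_def by blast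
  then have len: "length Ts = n" "length fs = n" "length ps = n" and
    h0: "\<exists>ys. snd (\<pi>!0) = HType (Ts!0) (Fn (fs!0) ys)" and
    hi: "\<forall>i. 1 \<le> i \<and> i < n \<longrightarrow>
              (\<exists>xs ys. snd (\<pi>!i) = HTriple (Fn (fs!(i-1)) xs) (ps!i) (Fn (fs!i) ys))
            \<and> (\<exists>\<mu>. delta E (Ts!(i-1)) (ps!i) = Some (ShType (Ts!i), \<mu>))" and
    lT: "last Ts = T0" and lf: "last fs = f0"
    by simp_all
  have n0: "n > 0" using ne n_def by simp
  have lT': "Ts!(n-1) = T0" using lT len n0 by (metis One_nat_def last_conv_nth length_0_conv less_irrefl)
  have lf': "fs!(n-1) = f0" using lf len n0 by (metis One_nat_def last_conv_nth length_0_conv less_irrefl)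
  define \<pi>' where "\<pi>' = \<pi> @ [\<tau>]"
  define G' where "G' = G(n := g)"
  have acc: "accessible_with E \<pi>' T f"
    unfolding accessible_with_def
  proof (intro conjI)
    show "\<pi>' \<noteq> []" "set \<pi>' \<subseteq> stgds E" using st \<tau>0(1) by (auto simp: \<pi>'_def)
    show "\<exists>Ts fs ps. length Ts = length \<pi>' \<and> length fs = length \<pi>' \<and> length ps = length \<pi>' \<and>
        (\<exists>ys. snd (\<pi>' ! 0) = HType (Ts ! 0) (Fn (fs ! 0) ys)) \<and>
        (\<forall>i. 1 \<le> i \<and> i < length \<pi>' \<longrightarrow>
             (\<exists>xs ys. snd (\<pi>' ! i) = HTriple (Fn (fs ! (i - 1)) xs) (ps ! i) (Fn (fs ! i) ys)) \<and>
             (\<exists>\<mu>. delta E (Ts ! (i - 1)) (ps ! i) = Some (ShType (Ts ! i), \<mu>))) \<and>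
        last Ts = T \<and> last fs = f"
    proof (rule exI[of _ "Ts @ [T]"], rule exI[of _ "fs @ [f]"], rule exI[of _ "ps @ [q]"], intro conjI allI impI)
      show "length (Ts @ [T]) = length \<pi>'" "length (fs @ [f]) = length \<pi>'" "length (ps @ [q]) = length \<pi>'"
        using len by (auto simp: \<pi>'_def n_def)
      show "\<exists>ys. snd (\<pi>' ! 0) = HType ((Ts @ [T]) ! 0) (Fn ((fs @ [f]) ! 0) ys)"
        using h0 n0 len by (simp add: \<pi>'_def nth_append n_def)
      show "last (Ts @ [T]) = T" "last (fs @ [f]) = f" by simp_all
      fix i assume i: "1 \<le> i \<and> i < length \<pi>'"
      have c: "i < n \<or> i = n" using i by (auto simp: \<pi>'_def n_def)
      show "\<exists>xs ys. snd (\<pi>' ! i) = HTriple (Fn ((fs @ [f]) ! (i - 1)) xs) ((ps @ [q]) ! i) (Fn ((fs @ [f]) ! i) ys)"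
      proof (cases "i < n")
        case True
        then show ?thesis using hi i len by (auto simp: \<pi>'_def nth_append n_def)
      next
        case False
        then have "i = n" using c by simp
        then show ?thesis using len n0 lT' lf' \<tau>(1) s0 t ff by (auto simp: \<pi>'_def nth_append n_def)
      qed
      show "\<exists>\<mu>. delta E ((Ts @ [T]) ! (i - 1)) ((ps @ [q]) ! i) = Some (ShType ((Ts @ [T]) ! i), \<mu>)"
      proof (cases "i < n")
        case True
        then show ?thesis using hi i len by (auto simp: \<pi>'_def nth_append n_def)
      next
        case False
        then have "i = n" using c by simp
        then show ?thesis using len n0 lT' close.hyps(3) S by (auto simp: \<pi>'_def nth_append n_def)
      qed
    qed
  qed
  have "chain E I \<pi>' G' T f a"
    unfolding chain_def
  proof (intro conjI allI impI)
    show "accessible_with E \<pi>' T f" by (rule acc)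
    fix k assume "k < length \<pi>'"
    then have "k < n \<or> k = n" by (auto simp: \<pi>'_def n_def)
    then show "body_sat I (G' k) (fst (\<pi>' ! k))"
      using bs \<tau>0(2) by (auto simp: \<pi>'_def G'_def nth_append n_def)
  next
    fix i assume i: "1 \<le> i \<and> i < length \<pi>'"
    then have "i < n \<or> i = n" by (auto simp: \<pi>'_def n_def)
    then show "map (G' i) (subj_args (snd (\<pi>' ! i))) = map (G' (i - 1)) (obj_args (snd (\<pi>' ! (i - 1))))"
    proof (elim disjE)
      assume "i < n" then show ?thesis using lk i by (auto simp: \<pi>'_def G'_def nth_append n_def)
    next
      assume "i = n"
      have e: "\<pi>'!n = \<tau>" "\<pi>'!(n-1) = \<pi>!(n-1)" "last \<pi> = \<pi>!(n-1)"
        using n0 ne by (auto simp: \<pi>'_def nth_append n_def last_conv_nth)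
      have nn: "n - 1 \<noteq> n" using n0 by arith
      have e2: "G' n = g" "G'(n-1) = G(n-1)" using nn by (simp_all add: G'_def)
      show ?thesis using la e e2 \<open>i = n\<close> \<tau>(1) s0 by simp
    qed
  next
    show "map (G' (length \<pi>' - 1)) (obj_args (snd (last \<pi>'))) = a"
      using \<tau>(1) t ya by (simp add: \<pi>'_def G'_def n_def)
  qed
  then show ?case by blast
qed

lemma seq_facts:
  "length (tgd_seq \<pi> \<sigma> \<sigma>') = Suc (Suc (length \<pi>))"
  "k < length \<pi> \<Longrightarrow> tgd_seq \<pi> \<sigma> \<sigma>' ! k = \<pi> ! k"
  "tgd_seq \<pi> \<sigma> \<sigma>' ! length \<pi> = \<sigma>"
  "tgd_seq \<pi> \<sigma> \<sigma>' ! Suc (length \<pi>) = \<sigma>'"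
  by (auto simp: tgd_seq_def nth_append)

lemma tv_mem: "k < length (tgd_seq \<pi> \<sigma> \<sigma>') \<Longrightarrow> v \<in> tgd_vars (tgd_seq \<pi> \<sigma> \<sigma>' ! k) \<Longrightarrow> (k, v) \<in> tagged_vars \<pi> \<sigma> \<sigma>'"
  unfolding tagged_vars_def by blast

lemma prev_lt: "1 \<le> i \<Longrightarrow> i < length (tgd_seq \<pi> \<sigma> \<sigma>') \<Longrightarrow> prev_idx \<pi> i < length (tgd_seq \<pi> \<sigma> \<sigma>')"
  by (auto simp: prev_idx_def seq_facts)

lemma ident_mem: "1 \<le> i \<Longrightarrow> i < length (tgd_seq \<pi> \<sigma> \<sigma>') \<Longrightarrow>
   (x, y) \<in> set (zip (subj_args (snd (tgd_seq \<pi> \<sigma> \<sigma>' ! i))) (obj_args (snd (tgd_seq \<pi> \<sigma> \<sigma>' ! prev_idx \<pi> i))))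
   \<Longrightarrow> ((i, x), (prev_idx \<pi> i, y)) \<in> ident \<pi> \<sigma> \<sigma>'"
  unfolding ident_def by blast

lemma ident_map:
  assumes hp: "is_h_pi nullL \<pi> \<sigma> \<sigma>' hp" and i: "1 \<le> i" "i < length (tgd_seq \<pi> \<sigma> \<sigma>')"
    and l: "length (subj_args (snd (tgd_seq \<pi> \<sigma> \<sigma>' ! i))) = length (obj_args (snd (tgd_seq \<pi> \<sigma> \<sigma>' ! prev_idx \<pi> i)))"
  shows "map (\<lambda>v. hp (i, v)) (subj_args (snd (tgd_seq \<pi> \<sigma> \<sigma>' ! i)))
       = map (\<lambda>v. hp (prev_idx \<pi> i, v)) (obj_args (snd (tgd_seq \<pi> \<sigma> \<sigma>' ! prev_idx \<pi> i)))"
proof (rule nth_equalityI)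
  define xs where "xs = subj_args (snd (tgd_seq \<pi> \<sigma> \<sigma>' ! i))"
  define ys where "ys = obj_args (snd (tgd_seq \<pi> \<sigma> \<sigma>' ! prev_idx \<pi> i))"
  show "length (map (\<lambda>v. hp (i, v)) (subj_args (snd (tgd_seq \<pi> \<sigma> \<sigma>' ! i)))) =
    length (map (\<lambda>v. hp (prev_idx \<pi> i, v)) (obj_args (snd (tgd_seq \<pi> \<sigma> \<sigma>' ! prev_idx \<pi> i))))"
    using l by simp
  fix j assume "j < length (map (\<lambda>v. hp (i, v)) (subj_args (snd (tgd_seq \<pi> \<sigma> \<sigma>' ! i))))"
  then have j: "j < length xs" "j < length ys" using l by (simp_all add: xs_def ys_def)
  have z: "(xs!j, ys!j) \<in> set (zip xs ys)" using j by (auto simp: set_zip)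
  have m: "((i, xs!j), (prev_idx \<pi> i, ys!j)) \<in> ident \<pi> \<sigma> \<sigma>'"
    using ident_mem[OF i] z by (simp add: xs_def ys_def)
  have "xs!j \<in> set xs" using j by simp
  then have "xs!j \<in> head_vars (snd (tgd_seq \<pi> \<sigma> \<sigma>' ! i))" using subj_args_vars[of "snd (tgd_seq \<pi> \<sigma> \<sigma>' ! i)"] unfolding xs_def by blast
  then have "xs!j \<in> tgd_vars (tgd_seq \<pi> \<sigma> \<sigma>' ! i)" by (simp add: tgd_vars_def)
  then have u: "(i, xs!j) \<in> tagged_vars \<pi> \<sigma> \<sigma>'" by (rule tv_mem[OF i(2)])
  have "ys!j \<in> set ys" using j by simp
  then have "ys!j \<in> head_vars (snd (tgd_seq \<pi> \<sigma> \<sigma>' ! prev_idx \<pi> i))" using obj_args_vars[of "snd (tgd_seq \<pi> \<sigma> \<sigma>' ! prev_idx \<pi> i)"] unfolding ys_def by blast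
  then have "ys!j \<in> tgd_vars (tgd_seq \<pi> \<sigma> \<sigma>' ! prev_idx \<pi> i)" by (simp add: tgd_vars_def)
  then have w: "(prev_idx \<pi> i, ys!j) \<in> tagged_vars \<pi> \<sigma> \<sigma>'" by (rule tv_mem[OF prev_lt[OF i]])
  have iff: "\<forall>u\<in>tagged_vars \<pi> \<sigma> \<sigma>'. \<forall>w\<in>tagged_vars \<pi> \<sigma> \<sigma>'.
         hp u = hp w \<longleftrightarrow> (u, w) \<in> (ident \<pi> \<sigma> \<sigma>' \<union> (ident \<pi> \<sigma> \<sigma>')\<inverse>)\<^sup>*"
    using hp unfolding is_h_pi_def by (elim conjE)
  have "((i, xs!j), (prev_idx \<pi> i, ys!j)) \<in> (ident \<pi> \<sigma> \<sigma>' \<union> (ident \<pi> \<sigma> \<sigma>')\<inverse>)\<^sup>*"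
    using m by auto
  then have "hp (i, xs!j) = hp (prev_idx \<pi> i, ys!j)"
    using iff u w by blast
  then show "map (\<lambda>v. hp (i, v)) (subj_args (snd (tgd_seq \<pi> \<sigma> \<sigma>' ! i))) ! j =
         map (\<lambda>v. hp (prev_idx \<pi> i, v)) (obj_args (snd (tgd_seq \<pi> \<sigma> \<sigma>' ! prev_idx \<pi> i))) ! j"
    using j by (simp add: xs_def ys_def)
qed

lemma hom_body:
  assumes "is_hom nullL h (I_pi \<pi> \<sigma> \<sigma>' hp) I" "k < length (tgd_seq \<pi> \<sigma> \<sigma>')"
  shows "body_sat I (copy_assign h hp k) (fst (tgd_seq \<pi> \<sigma> \<sigma>' ! k))"
  unfolding body_sat_def
proof (intro ballI, clarify)
  fix R xs assume "(R, xs) \<in> set (fst (tgd_seq \<pi> \<sigma> \<sigma>' ! k))"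
  then have "(R, map (Pair k) xs) \<in> tagged_body \<pi> \<sigma> \<sigma>'" using assms(2) unfolding tagged_body_def by blast
  then have "(R, map hp (map (Pair k) xs)) \<in> I_pi \<pi> \<sigma> \<sigma>' hp" unfolding I_pi_def by force
  moreover have "\<forall>(R, us)\<in>I_pi \<pi> \<sigma> \<sigma>' hp. (R, map h us) \<in> I" using assms(1) unfolding is_hom_def by (elim conjE)
  ultimately have "(R, map h (map hp (map (Pair k) xs))) \<in> I" by fast
  then show "(R, map (copy_assign h hp k) xs) \<in> I" by (simp add: copy_assign_def comp_def)
qed

lemma const_obj:
  assumes wf: "wf_setting E nullI" and noI: "\<forall>(R, us)\<in>I. \<forall>x\<in>set us. x \<notin> nullL"
    and s: "\<sigma> \<in> stgds E" and b: "body_sat I g (fst \<sigma>)"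
  shows "is_const nullI nullL (eval_term (cons_int E) g (obj_term (snd \<sigma>)))"
proof -
  have full: "head_vars (snd \<sigma>) \<subseteq> body_vars (fst \<sigma>)" and wh: "wf_head E (snd \<sigma>)"
    using wf s unfolding wf_setting_def by auto
  have nn: "x \<in> body_vars (fst \<sigma>) \<Longrightarrow> g x \<notin> nullL" for x
  proof -
    assume "x \<in> body_vars (fst \<sigma>)"
    then have "g x \<in> adom I" using body_sat_adom[OF b] by blast
    then show ?thesis using noI unfolding adom_def by blast
  qed
  show ?thesis
  proof (cases "obj_term (snd \<sigma>)")
    case (Var x)
    then have "x \<in> body_vars (fst \<sigma>)" using full obj_term_vars[of "snd \<sigma>"] by auto
    then show ?thesis using Var nn by simp
  next
    case (Fn f' us)
    then have "length us = cons_arity E f'" using wf_obj_term[OF wh] by simp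
    then have "length (map g us) = cons_arity E f'" by simp
    then show ?thesis using Fn wf unfolding wf_setting_def by simp
  qed
qed

lemma dir_a:
  assumes wf: "wf_setting E nullI" and noI: "\<forall>(R, us)\<in>I. \<forall>x\<in>set us. x \<notin> nullL"
    and ca: "cond_a E nullL I T f p \<pi> \<sigma> \<sigma>' hp h"
  shows "cond_b E nullI nullL I T f p
              (map (copy_assign h hp (length \<pi>)) (subj_args (snd \<sigma>)))
              (eval_term (cons_int E) (copy_assign h hp (length \<pi>)) (obj_term (snd \<sigma>)))
              (eval_term (cons_int E) (copy_assign h hp (Suc (length \<pi>))) (obj_term (snd \<sigma>')))
          \<and> map (copy_assign h hp (length \<pi>)) (subj_args (snd \<sigma>))
              = map (copy_assign h hp (Suc (length \<pi>))) (subj_args (snd \<sigma>'))"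
proof -
  have acc: "accessible_with E \<pi> T f" and cont: "contentious E \<sigma> \<sigma>' T f p"
    and hpi: "is_h_pi nullL \<pi> \<sigma> \<sigma>' hp" and hom: "is_hom nullL h (I_pi \<pi> \<sigma> \<sigma>' hp) I"
    using ca unfolding cond_a_def by auto
  define n where "n = length \<pi>"
  define seq where "seq = tgd_seq \<pi> \<sigma> \<sigma>'"
  define G where "G = copy_assign h hp"
  have ne: "\<pi> \<noteq> []" and st: "set \<pi> \<subseteq> stgds E" using acc unfolding accessible_with_def by auto
  have n0: "n > 0" using ne n_def by simp
  obtain Ts fs ps where P:
    "length Ts = n \<and> length fs = n \<and> length ps = n \<and>
    (\<exists>ys. snd (\<pi>!0) = HType (Ts!0) (Fn (fs!0) ys)) \<and>
    (\<forall>i. 1 \<le> i \<and> i < n \<longrightarrow>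
              (\<exists>xs ys. snd (\<pi>!i) = HTriple (Fn (fs!(i-1)) xs) (ps!i) (Fn (fs!i) ys))
            \<and> (\<exists>\<mu>. delta E (Ts!(i-1)) (ps!i) = Some (ShType (Ts!i), \<mu>))) \<and>
    last Ts = T \<and> last fs = f"
    using acc unfolding accessible_with_def n_def by blast
  then have len: "length Ts = n" "length fs = n" "length ps = n" and
    h0: "\<exists>ys. snd (\<pi>!0) = HType (Ts!0) (Fn (fs!0) ys)" and
    hi: "\<forall>i. 1 \<le> i \<and> i < n \<longrightarrow>
              (\<exists>xs ys. snd (\<pi>!i) = HTriple (Fn (fs!(i-1)) xs) (ps!i) (Fn (fs!i) ys))
            \<and> (\<exists>\<mu>. delta E (Ts!(i-1)) (ps!i) = Some (ShType (Ts!i), \<mu>))" and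
    lT: "last Ts = T" and lf: "last fs = f"
    by simp_all
  have lT': "Ts!(n-1) = T" using lT len n0 by (metis One_nat_def last_conv_nth length_0_conv less_irrefl)
  have lf': "fs!(n-1) = f" using lf len n0 by (metis One_nat_def last_conv_nth length_0_conv less_irrefl)
  obtain z t z' t' where hs: "snd \<sigma> = HTriple (Fn f z) p t" "snd \<sigma>' = HTriple (Fn f z') p t'"
    and ss: "\<sigma> \<in> stgds E" "\<sigma>' \<in> stgds E"
    using cont unfolding contentious_def by blast
  have wfh: "\<tau> \<in> stgds E \<Longrightarrow> wf_head E (snd \<tau>)" for \<tau> using wf unfolding wf_setting_def by auto
  have full: "\<tau> \<in> stgds E \<Longrightarrow> head_vars (snd \<tau>) \<subseteq> body_vars (fst \<tau>)" for \<tau>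
    using wf unfolding wf_setting_def by auto
  have sl: "length seq = Suc (Suc n)" "k < n \<Longrightarrow> seq ! k = \<pi> ! k" "seq ! n = \<sigma>" "seq ! Suc n = \<sigma>'" for k
    unfolding seq_def n_def by (simp_all add: seq_facts)
  have body: "k < Suc (Suc n) \<Longrightarrow> body_sat I (G k) (fst (seq ! k))" for k
    using hom_body[OF hom] sl(1) unfolding seq_def G_def by auto
  have idm: "1 \<le> i \<Longrightarrow> i < Suc (Suc n) \<Longrightarrow>
      length (subj_args (snd (seq ! i))) = length (obj_args (snd (seq ! prev_idx \<pi> i))) \<Longrightarrow>
      map (G i) (subj_args (snd (seq ! i))) = map (G (prev_idx \<pi> i)) (obj_args (snd (seq ! prev_idx \<pi> i)))" for i
  proof -
    assume a: "1 \<le> i" "i < Suc (Suc n)"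
      "length (subj_args (snd (seq ! i))) = length (obj_args (snd (seq ! prev_idx \<pi> i)))"
    have "map (\<lambda>v. hp (i, v)) (subj_args (snd (seq ! i)))
       = map (\<lambda>v. hp (prev_idx \<pi> i, v)) (obj_args (snd (seq ! prev_idx \<pi> i)))"
      using ident_map[OF hpi a(1)] a(2,3) sl(1) unfolding seq_def by auto
    then have "map h (map (\<lambda>v. hp (i, v)) (subj_args (snd (seq ! i))))
       = map h (map (\<lambda>v. hp (prev_idx \<pi> i, v)) (obj_args (snd (seq ! prev_idx \<pi> i))))" by simp
    then show ?thesis by (simp add: G_def copy_assign_def comp_def)
  qed
  have objs: "i < n \<Longrightarrow> \<exists>ys. obj_term (snd (\<pi>!i)) = Fn (fs!i) ys \<and> obj_args (snd (\<pi>!i)) = ys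
       \<and> length ys = cons_arity E (fs!i)" for i
  proof -
    assume i: "i < n"
    have "\<pi>!i \<in> stgds E" using st i n_def by auto
    then have w: "wf_head E (snd (\<pi>!i))" by (rule wfh)
    show ?thesis
    proof (cases "i = 0")
      case True
      then show ?thesis using h0 w by auto
    next
      case False
      then show ?thesis using hi i w by (metis One_nat_def less_one linorder_not_le obj_args.simps(1) obj_term.simps(1) wf_head.simps(1) wf_term.simps(2))
    qed
  qed
  have types: "i < n \<Longrightarrow> TypeF (Ts!i) (Iri (cons_int E (fs!i) (map (G i) (obj_args (snd (\<pi>!i)))))) \<in> core_pre E I" for i
  proof (induction i)
    case 0
    obtain ys where y: "snd (\<pi>!0) = HType (Ts!0) (Fn (fs!0) ys)" using h0 by blast
    have s0: "\<pi>!0 \<in> stgds E" using st ne by (metis nth_mem length_greater_0_conv subsetD)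
    have "eval_head (cons_int E) (G 0) (snd (\<pi>!0)) \<in> core_pre E I"
      using core_pre.base[of "\<pi>!0" E I "G 0"] body[of 0] sl(2)[of 0] s0 n0 by auto
    then show ?case using y by simp
  next
    case (Suc i)
    have i: "i < n" "Suc i < n" using Suc.prems by auto
    obtain xs ys where hx: "snd (\<pi>!Suc i) = HTriple (Fn (fs!i) xs) (ps!Suc i) (Fn (fs!Suc i) ys)"
      and \<mu>: "\<exists>\<mu>. delta E (Ts!i) (ps!Suc i) = Some (ShType (Ts!Suc i), \<mu>)"
      using hi i(2) by fastforce
    have inS: "\<pi>!Suc i \<in> stgds E" using st i n_def by auto
    have lxs: "length xs = cons_arity E (fs!i)" using wfh[OF inS] hx by simp
    have tr: "eval_head (cons_int E) (G (Suc i)) (snd (\<pi>!Suc i)) \<in> core_pre E I"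
      using core_pre.base[of "\<pi>!Suc i" E I "G (Suc i)"] inS body[of "Suc i"] sl(2)[of "Suc i"] i by auto
    have pv: "prev_idx \<pi> (Suc i) = i" using i n_def by (simp add: prev_idx_def)
    obtain ys0 where o: "obj_args (snd (\<pi>!i)) = ys0" "length ys0 = cons_arity E (fs!i)"
      using objs[OF i(1)] by blast
    have "map (G (Suc i)) (subj_args (snd (seq ! Suc i))) = map (G i) (obj_args (snd (seq ! i)))"
      using idm[of "Suc i"] pv sl(2) i hx o lxs by auto
    then have eqm: "map (G (Suc i)) xs = map (G i) (obj_args (snd (\<pi>!i)))" using sl(2) i hx by auto
    have "Triple (Iri (cons_int E (fs!i) (map (G i) (obj_args (snd (\<pi>!i)))))) (ps!Suc i)
             (Iri (cons_int E (fs!Suc i) (map (G (Suc i)) ys))) \<in> core_pre E I"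
      using tr hx eqm by simp
    moreover obtain \<mu>0 where "delta E (Ts!i) (ps!Suc i) = Some (ShType (Ts!Suc i), \<mu>0)" using \<mu> by blast
    ultimately have "shape_fact (ShType (Ts!Suc i)) (Iri (cons_int E (fs!Suc i) (map (G (Suc i)) ys))) \<in> core_pre E I"
      using core_pre.close[OF Suc.IH[OF i(1)]] by blast
    then show ?case using hx by simp
  qed
  obtain ysl where ol: "obj_args (snd (\<pi>!(n-1))) = ysl" "length ysl = cons_arity E f"
    using objs[of "n-1"] n0 lf' by fastforce
  have tyT: "TypeF T (Iri (cons_int E f (map (G (n-1)) ysl))) \<in> core_pre E I"
    using types[of "n-1"] n0 lT' lf' ol by simp
  have pvn: "prev_idx \<pi> n = n-1" "prev_idx \<pi> (Suc n) = n-1" by (simp_all add: prev_idx_def n_def)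
  have lz: "length z = cons_arity E f" "length z' = cons_arity E f" using wfh[OF ss(1)] wfh[OF ss(2)] hs by simp_all
  have ma: "map (G n) z = map (G (n-1)) ysl"
    using idm[of n] n0 pvn sl hs lz ol by auto
  have ma': "map (G (Suc n)) z' = map (G (n-1)) ysl"
    using idm[of "Suc n"] n0 pvn sl hs lz ol by auto
  have tr1: "eval_head (cons_int E) (G n) (snd \<sigma>) \<in> core_pre E I"
    using core_pre.base[of \<sigma> E I "G n"] ss body[of n] sl by auto
  have tr2: "eval_head (cons_int E) (G (Suc n)) (snd \<sigma>') \<in> core_pre E I"
    using core_pre.base[of \<sigma>' E I "G (Suc n)"] ss body[of "Suc n"] sl by auto
  have adom: "set (map (G n) z) \<subseteq> adom I"
  proof
    fix x assume "x \<in> set (map (G n) z)"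
    then obtain v where v: "v \<in> set z" "x = G n v" by auto
    have "v \<in> body_vars (fst \<sigma>)" using full[OF ss(1)] hs v by auto
    then show "x \<in> adom I" using body_sat_adom[OF body[of n]] sl v by auto
  qed
  have nonnull: "\<forall>x\<in>set (map (G n) z). x \<notin> nullL" using adom noI unfolding adom_def by blast
  have c1: "is_const nullI nullL (eval_term (cons_int E) (G n) (obj_term (snd \<sigma>)))"
    using const_obj[OF wf noI ss(1)] body[of n] sl by auto
  have c2: "is_const nullI nullL (eval_term (cons_int E) (G (Suc n)) (obj_term (snd \<sigma>')))"
    using const_obj[OF wf noI ss(2)] body[of "Suc n"] sl by auto
  show ?thesis
    unfolding cond_b_def
    using lz adom nonnull c1 c2 tyT tr1 tr2 ma ma' hs ol(2)
    by (simp add: G_def[symmetric] n_def[symmetric])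
qed

lemma exists_hp:
  fixes TV :: "'a set" and Rl :: "('a \<times> 'a) set" and nullL :: "'l set"
  assumes fin: "finite TV" and inf: "infinite nullL"
  shows "\<exists>hp :: 'a \<Rightarrow> 'l. (\<forall>u\<in>TV. hp u \<in> nullL) \<and>
     (\<forall>u\<in>TV. \<forall>w\<in>TV. hp u = hp w \<longleftrightarrow> (u, w) \<in> (Rl \<union> Rl\<inverse>)\<^sup>*)"
proof -
  obtain e :: "'a \<Rightarrow> nat" and n where e: "inj_on e TV" using finite_imp_inj_to_nat_seg[OF fin] by blast
  obtain c :: "nat \<Rightarrow> 'l" where c: "inj c" "range c \<subseteq> nullL" using infinite_countable_subset[OF inf] by blast
  define S where "S = (Rl \<union> Rl\<inverse>)\<^sup>*"
  have symS: "sym S" unfolding S_def by (rule sym_rtrancl[OF sym_Un_converse])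
  have transS: "trans S" unfolding S_def by (rule trans_rtrancl)
  define rep where "rep u = (SOME w. w \<in> TV \<and> (u, w) \<in> S)" for u
  have rep: "u \<in> TV \<Longrightarrow> rep u \<in> TV \<and> (u, rep u) \<in> S" for u
    unfolding rep_def by (rule someI[of _ u]) (simp add: S_def)
  have rep_eq: "(u, w) \<in> S \<Longrightarrow> rep u = rep w" for u w
  proof -
    assume uw: "(u, w) \<in> S"
    then have wu: "(w, u) \<in> S" using symS by (meson symD)
    have "(\<lambda>x. x \<in> TV \<and> (u, x) \<in> S) = (\<lambda>x. x \<in> TV \<and> (w, x) \<in> S)"
      using uw wu transS by (meson transD)
    then show ?thesis unfolding rep_def by simp
  qed
  define hp where "hp u = c (e (rep u))" for u
  show ?thesis
  proof (intro exI[of _ hp] conjI ballI)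
    fix u assume "u \<in> TV" then show "hp u \<in> nullL" using c(2) unfolding hp_def by auto
  next
    fix u w assume u: "u \<in> TV" and w: "w \<in> TV"
    show "hp u = hp w \<longleftrightarrow> (u, w) \<in> (Rl \<union> Rl\<inverse>)\<^sup>*"
    proof
      assume "hp u = hp w"
      then have "e (rep u) = e (rep w)" using c(1) unfolding hp_def by (meson injD)
      then have "rep u = rep w" using e rep u w by (meson inj_onD)
      then have "(u, rep u) \<in> S" "(rep u, w) \<in> S" using rep[OF u] rep[OF w] symS by (auto dest: symD)
      then show "(u, w) \<in> (Rl \<union> Rl\<inverse>)\<^sup>*" using transS unfolding S_def by (meson transD)
    next
      assume "(u, w) \<in> (Rl \<union> Rl\<inverse>)\<^sup>*"
      then show "hp u = hp w" using rep_eq unfolding hp_def S_def by metis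
    qed
  qed
qed

lemma respects_rtrancl:
  assumes "\<And>u w. (u, w) \<in> Rl \<Longrightarrow> G u = G w" and "(u, w) \<in> (Rl \<union> Rl\<inverse>)\<^sup>*"
  shows "G u = G w"
  using assms(2)
proof (induction rule: rtrancl_induct)
  case base then show ?case by simp
next
  case (step y z) then show ?case using assms(1) by auto
qed

lemma finite_tgd_vars: "finite (tgd_vars \<tau>)"
proof -
  have "finite (body_vars (fst \<tau>))" unfolding body_vars_def by auto
  moreover have "finite (head_vars h)" for h :: "('t,'p,'f,'v) head"
  proof -
    have "finite (term_vars t)" for t :: "('f,'v) iterm" by (cases t) auto
    then show ?thesis by (cases h) auto
  qed
  ultimately show ?thesis unfolding tgd_vars_def by auto
qed

lemma finite_tagged_vars: "finite (tagged_vars \<pi> \<sigma> \<sigma>')"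
proof -
  have "tagged_vars \<pi> \<sigma> \<sigma>' \<subseteq> (\<Union>k<length (tgd_seq \<pi> \<sigma> \<sigma>'). {k} \<times> tgd_vars (tgd_seq \<pi> \<sigma> \<sigma>' ! k))"
    unfolding tagged_vars_def by auto
  moreover have "finite (\<Union>k<length (tgd_seq \<pi> \<sigma> \<sigma>'). {k} \<times> tgd_vars (tgd_seq \<pi> \<sigma> \<sigma>' ! k))"
    by (intro finite_UN_I) (auto intro!: finite_cartesian_product finite_tgd_vars)
  ultimately show ?thesis by (rule finite_subset)
qed

lemma dir_b:
  assumes wf: "wf_setting E nullI" and con: "constructive E" and inf: "infinite nullL"
    and vs: "violation_sort E T p" and cb: "cond_b E nullI nullL I T f p a b b'"
  shows "\<exists>\<pi> \<sigma> \<sigma>' hp h. cond_a E nullL I T f p \<pi> \<sigma> \<sigma>' hp h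
               \<and> a = map (copy_assign h hp (length \<pi>)) (subj_args (snd \<sigma>))
               \<and> a = map (copy_assign h hp (Suc (length \<pi>))) (subj_args (snd \<sigma>'))
               \<and> b = eval_term (cons_int E) (copy_assign h hp (length \<pi>)) (obj_term (snd \<sigma>))
               \<and> b' = eval_term (cons_int E) (copy_assign h hp (Suc (length \<pi>))) (obj_term (snd \<sigma>'))"
proof -
  have la: "length a = cons_arity E f"
    and ty: "TypeF T (Iri (cons_int E f a)) \<in> core_pre E I"
    and tr1: "Triple (Iri (cons_int E f a)) p b \<in> core_pre E I"
    and tr2: "Triple (Iri (cons_int E f a)) p b' \<in> core_pre E I"
    using cb unfolding cond_b_def by auto
  obtain \<pi> G where ch: "chain E I \<pi> G T f a" using chain_lemma[OF wf con ty refl la] by blast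
  obtain \<sigma> g1 z t where s1: "\<sigma> \<in> stgds E" "body_sat I g1 (fst \<sigma>)" "snd \<sigma> = HTriple (Fn f z) p t"
     "map g1 z = a" "eval_term (cons_int E) g1 t = b"
    using triple_analysis[OF wf con tr1 la] by blast
  obtain \<sigma>' g2 z' t' where s2: "\<sigma>' \<in> stgds E" "body_sat I g2 (fst \<sigma>')" "snd \<sigma>' = HTriple (Fn f z') p t'"
     "map g2 z' = a" "eval_term (cons_int E) g2 t' = b'"
    using triple_analysis[OF wf con tr2 la] by blast
  have acc: "accessible_with E \<pi> T f"
    and bs: "\<forall>k<length \<pi>. body_sat I (G k) (fst (\<pi>!k))"
    and lk: "\<forall>i. 1 \<le> i \<and> i < length \<pi> \<longrightarrow>
          map (G i) (subj_args (snd (\<pi>!i))) = map (G (i-1)) (obj_args (snd (\<pi>!(i-1))))"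
    and lst: "map (G (length \<pi> - 1)) (obj_args (snd (last \<pi>))) = a"
    using ch unfolding chain_def by auto
  define n where "n = length \<pi>"
  have ne: "\<pi> \<noteq> []" using acc unfolding accessible_with_def by auto
  have n0: "n > 0" using ne n_def by simp
  have lastn: "last \<pi> = \<pi>!(n-1)" using ne n_def by (simp add: last_conv_nth)
  define seq where "seq = tgd_seq \<pi> \<sigma> \<sigma>'"
  have sl: "length seq = Suc (Suc n)" "k < n \<Longrightarrow> seq ! k = \<pi> ! k" "seq ! n = \<sigma>" "seq ! Suc n = \<sigma>'" for k
    unfolding seq_def n_def by (simp_all add: seq_facts)
  define Gs where "Gs k = (if k < n then G k else if k = n then g1 else g2)" for k
  define G' where "G' = (\<lambda>(k, v). Gs k v)"
  have body: "k < Suc (Suc n) \<Longrightarrow> body_sat I (Gs k) (fst (seq ! k))" for k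
  proof -
    assume "k < Suc (Suc n)"
    then consider "k < n" | "k = n" | "k = Suc n" by linarith
    then show ?thesis
    proof cases
      case 1 then show ?thesis using bs sl(2) by (simp add: Gs_def n_def)
    next
      case 2 then show ?thesis using s1 sl(3) by (simp add: Gs_def)
    next
      case 3 then show ?thesis using s2 sl(4) by (simp add: Gs_def)
    qed
  qed
  have link: "1 \<le> i \<Longrightarrow> i < Suc (Suc n) \<Longrightarrow>
      map (Gs i) (subj_args (snd (seq ! i))) = map (Gs (prev_idx \<pi> i)) (obj_args (snd (seq ! prev_idx \<pi> i)))" for i
  proof -
    assume i: "1 \<le> i" "i < Suc (Suc n)"
    have p1: "Gs (n-1) = G (n-1)" "seq ! (n-1) = \<pi> ! (n-1)" using n0 sl(2)[of "n-1"] by (simp_all add: Gs_def)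
    consider "i < n" | "i = n" | "i = Suc n" using i by linarith
    then show ?thesis
    proof cases
      case 1
      then have "prev_idx \<pi> i = i - 1" by (simp add: prev_idx_def n_def)
      moreover have "i - 1 < n" using 1 by arith
      then have "Gs (i-1) = G (i-1)" by (simp add: Gs_def)
      moreover have "Gs i = G i" using 1 by (simp add: Gs_def)
      moreover have "seq ! i = \<pi> ! i" "seq ! (i-1) = \<pi> ! (i-1)" using 1 sl(2) by auto
      ultimately show ?thesis using lk i 1 n_def by auto
    next
      case 2
      then have "prev_idx \<pi> i = n - 1" by (simp add: prev_idx_def n_def)
      moreover have "Gs i = g1" using 2 by (simp add: Gs_def)
      ultimately show ?thesis using 2 p1 sl(3) s1(3,4) lst lastn n_def by simp
    next
      case 3
      then have "prev_idx \<pi> i = n - 1" by (simp add: prev_idx_def n_def)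
      moreover have "Gs i = g2" using 3 by (simp add: Gs_def)
      ultimately show ?thesis using 3 p1 sl(4) s2(3,4) lst lastn n_def by simp
    qed
  qed
  have edge: "(u, w) \<in> ident \<pi> \<sigma> \<sigma>' \<Longrightarrow> G' u = G' w" for u w
  proof -
    assume "(u, w) \<in> ident \<pi> \<sigma> \<sigma>'"
    then obtain i x y where e: "u = (i, x)" "w = (prev_idx \<pi> i, y)" "1 \<le> i" "i < length seq"
      "(x, y) \<in> set (zip (subj_args (snd (seq ! i))) (obj_args (snd (seq ! prev_idx \<pi> i))))"
      unfolding ident_def seq_def by blast
    have "Gs i x = Gs (prev_idx \<pi> i) y"
      using map_eq_zip[OF link[OF e(3)] e(5)] e(4) sl(1) by simp
    then show ?thesis using e unfolding G'_def by simp
  qed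
  define TV where "TV = tagged_vars \<pi> \<sigma> \<sigma>'"
  obtain hp where hp1: "\<forall>u\<in>TV. hp u \<in> nullL"
    and hp2: "\<forall>u\<in>TV. \<forall>w\<in>TV. hp u = hp w \<longleftrightarrow> (u, w) \<in> (ident \<pi> \<sigma> \<sigma>' \<union> (ident \<pi> \<sigma> \<sigma>')\<inverse>)\<^sup>*"
    using exists_hp[OF finite_tagged_vars inf, of \<pi> \<sigma> \<sigma>' "ident \<pi> \<sigma> \<sigma>'"] unfolding TV_def by blast
  have hpi: "is_h_pi nullL \<pi> \<sigma> \<sigma>' hp" unfolding is_h_pi_def using hp1 hp2 TV_def by blast
  define h where "h l = (if \<exists>u\<in>TV. hp u = l then G' (SOME u. u \<in> TV \<and> hp u = l) else l)" for l
  have hhp: "u \<in> TV \<Longrightarrow> h (hp u) = G' u" for u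
  proof -
    assume u: "u \<in> TV"
    define u' where "u' = (SOME w. w \<in> TV \<and> hp w = hp u)"
    have u': "u' \<in> TV \<and> hp u' = hp u" unfolding u'_def using u by (metis (mono_tags, lifting) someI)
    then have "(u', u) \<in> (ident \<pi> \<sigma> \<sigma>' \<union> (ident \<pi> \<sigma> \<sigma>')\<inverse>)\<^sup>*" using hp2 u by blast
    then have "G' u' = G' u" using respects_rtrancl[of "ident \<pi> \<sigma> \<sigma>'" G'] edge by blast
    moreover have "h (hp u) = G' u'" unfolding h_def u'_def using u by auto
    ultimately show ?thesis by simp
  qed
  have ca: "copy_assign h hp k v = Gs k v" if "(k, v) \<in> TV" for k v
    using hhp[OF that] unfolding copy_assign_def G'_def by simp
  have inTV: "k < Suc (Suc n) \<Longrightarrow> v \<in> tgd_vars (seq ! k) \<Longrightarrow> (k, v) \<in> TV" for k v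
    using tv_mem[of k \<pi> \<sigma> \<sigma>' v] sl(1) unfolding TV_def seq_def by simp
  have hom: "is_hom nullL h (I_pi \<pi> \<sigma> \<sigma>' hp) I"
    unfolding is_hom_def
  proof (intro conjI allI impI ballI)
    fix l assume "l \<notin> nullL"
    then have "\<not> (\<exists>u\<in>TV. hp u = l)" using hp1 by blast
    then show "h l = l" unfolding h_def by simp
  next
    fix x assume "x \<in> I_pi \<pi> \<sigma> \<sigma>' hp"
    then obtain k R xs where x: "x = (R, map hp (map (Pair k) xs))" "k < Suc (Suc n)"
      "(R, xs) \<in> set (fst (seq ! k))"
      unfolding I_pi_def tagged_body_def seq_def using sl(1) seq_def by auto
    have vs: "v \<in> set xs \<Longrightarrow> (k, v) \<in> TV" for v
      using inTV[OF x(2)] x(3) unfolding tgd_vars_def body_vars_def by blast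
    have eqm: "map h (map hp (map (Pair k) xs)) = map (Gs k) xs"
      using ca vs by (simp add: copy_assign_def)
    have "(R, map (Gs k) xs) \<in> I" using body[OF x(2)] x(3) unfolding body_sat_def by blast
    then have "(R, map h (map hp (map (Pair k) xs))) \<in> I" by (subst eqm)
    then show "case x of (R, us) \<Rightarrow> (R, map h us) \<in> I" using x(1) by simp
  qed
  have cont: "contentious E \<sigma> \<sigma>' T f p"
    unfolding contentious_def accessible_def using s1 s2 acc vs by blast
  have hv1: "v \<in> head_vars (snd \<sigma>) \<Longrightarrow> copy_assign h hp n v = g1 v" for v
    using ca[of n v] inTV[of n v] sl(3) by (simp add: tgd_vars_def Gs_def)
  have hv2: "v \<in> head_vars (snd \<sigma>') \<Longrightarrow> copy_assign h hp (Suc n) v = g2 v" for v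
    using ca[of "Suc n" v] inTV[of "Suc n" v] sl(4) by (simp add: tgd_vars_def Gs_def)
  have A1: "a = map (copy_assign h hp n) (subj_args (snd \<sigma>))"
    using s1(3,4) hv1 by (auto simp: map_eq_conv)
  have A2: "a = map (copy_assign h hp (Suc n)) (subj_args (snd \<sigma>'))"
    using s2(3,4) hv2 by (auto simp: map_eq_conv)
  have B1: "b = eval_term (cons_int E) (copy_assign h hp n) (obj_term (snd \<sigma>))"
  proof -
    have "eval_term (cons_int E) (copy_assign h hp n) t = eval_term (cons_int E) g1 t"
      by (rule eval_term_cong) (use s1(3) hv1 in auto)
    then show ?thesis using s1(3,5) by simp
  qed
  have B2: "b' = eval_term (cons_int E) (copy_assign h hp (Suc n)) (obj_term (snd \<sigma>'))"
  proof -
    have "eval_term (cons_int E) (copy_assign h hp (Suc n)) t' = eval_term (cons_int E) g2 t'"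
      by (rule eval_term_cong) (use s2(3) hv2 in auto)
    then show ?thesis using s2(3,5) by simp
  qed
  have "cond_a E nullL I T f p \<pi> \<sigma> \<sigma>' hp h"
    unfolding cond_a_def using acc cont hpi hom by blast
  then show ?thesis using A1 A2 B1 B2 n_def by blast
qed


theorem proposition1:
  fixes E :: "('r,'t,'p,'f,'i,'l,'v) setting"
    and nullI :: "'i set" and nullL :: "'l set"
    and I :: "('r \<times> 'l list) set"
    and T :: 't and f :: 'f and p :: 'p
  assumes "wf_setting E nullI"
    and "constructive E"
    and "infinite nullL"
    and "violation_sort E T p"
    and "rel_instance E I"
    and "\<forall>(R, us)\<in>I. \<forall>x\<in>set us. x \<notin> nullL"
  shows "((\<exists>\<pi> \<sigma> \<sigma>' hp h. cond_a E nullL I T f p \<pi> \<sigma> \<sigma>' hp h)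
            \<longleftrightarrow> (\<exists>a b b'. cond_b E nullI nullL I T f p a b b'))
       \<and> (\<forall>\<pi> \<sigma> \<sigma>' hp h. cond_a E nullL I T f p \<pi> \<sigma> \<sigma>' hp h \<longrightarrow>
            cond_b E nullI nullL I T f p
              (map (copy_assign h hp (length \<pi>)) (subj_args (snd \<sigma>)))
              (eval_term (cons_int E) (copy_assign h hp (length \<pi>)) (obj_term (snd \<sigma>)))
              (eval_term (cons_int E) (copy_assign h hp (Suc (length \<pi>))) (obj_term (snd \<sigma>')))
          \<and> map (copy_assign h hp (length \<pi>)) (subj_args (snd \<sigma>))
              = map (copy_assign h hp (Suc (length \<pi>))) (subj_args (snd \<sigma>')))
       \<and> (\<forall>a b b'. cond_b E nullI nullL I T f p a b b' \<longrightarrow>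
            (\<exists>\<pi> \<sigma> \<sigma>' hp h. cond_a E nullL I T f p \<pi> \<sigma> \<sigma>' hp h
               \<and> a = map (copy_assign h hp (length \<pi>)) (subj_args (snd \<sigma>))
               \<and> a = map (copy_assign h hp (Suc (length \<pi>))) (subj_args (snd \<sigma>'))
               \<and> b = eval_term (cons_int E) (copy_assign h hp (length \<pi>)) (obj_term (snd \<sigma>))
               \<and> b' = eval_term (cons_int E) (copy_assign h hp (Suc (length \<pi>))) (obj_term (snd \<sigma>'))))"
  proof -
  have A: "\<forall>\<pi> \<sigma> \<sigma>' hp h. cond_a E nullL I T f p \<pi> \<sigma> \<sigma>' hp h \<longrightarrow>
            cond_b E nullI nullL I T f p
              (map (copy_assign h hp (length \<pi>)) (subj_args (snd \<sigma>)))
              (eval_term (cons_int E) (copy_assign h hp (length \<pi>)) (obj_term (snd \<sigma>)))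
              (eval_term (cons_int E) (copy_assign h hp (Suc (length \<pi>))) (obj_term (snd \<sigma>')))
          \<and> map (copy_assign h hp (length \<pi>)) (subj_args (snd \<sigma>))
              = map (copy_assign h hp (Suc (length \<pi>))) (subj_args (snd \<sigma>'))"
    using dir_a[OF assms(1) assms(6)] by blast
  have B: "\<forall>a b b'. cond_b E nullI nullL I T f p a b b' \<longrightarrow>
            (\<exists>\<pi> \<sigma> \<sigma>' hp h. cond_a E nullL I T f p \<pi> \<sigma> \<sigma>' hp h
               \<and> a = map (copy_assign h hp (length \<pi>)) (subj_args (snd \<sigma>))
               \<and> a = map (copy_assign h hp (Suc (length \<pi>))) (subj_args (snd \<sigma>'))
               \<and> b = eval_term (cons_int E) (copy_assign h hp (length \<pi>)) (obj_term (snd \<sigma>))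
               \<and> b' = eval_term (cons_int E) (copy_assign h hp (Suc (length \<pi>))) (obj_term (snd \<sigma>')))"
    using dir_b[OF assms(1,2,3,4)] by blast
  have C: "(\<exists>\<pi> \<sigma> \<sigma>' hp h. cond_a E nullL I T f p \<pi> \<sigma> \<sigma>' hp h)
            \<longleftrightarrow> (\<exists>a b b'. cond_b E nullI nullL I T f p a b b')"
  proof
    assume "\<exists>\<pi> \<sigma> \<sigma>' hp h. cond_a E nullL I T f p \<pi> \<sigma> \<sigma>' hp h"
    then obtain \<pi> \<sigma> \<sigma>' hp h where "cond_a E nullL I T f p \<pi> \<sigma> \<sigma>' hp h" by blast
    then show "\<exists>a b b'. cond_b E nullI nullL I T f p a b b'" using A by blast
  next
    assume "\<exists>a b b'. cond_b E nullI nullL I T f p a b b'"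
    then obtain a b b' where "cond_b E nullI nullL I T f p a b b'" by blast
    then show "\<exists>\<pi> \<sigma> \<sigma>' hp h. cond_a E nullL I T f p \<pi> \<sigma> \<sigma>' hp h" using B by blast
  qed
  show ?thesis using A B C by (intro conjI)
qed

end
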